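(* The elements appearing in a product of $\mathbf{PM}_k$ expressed in the fundamental basis form an interval for the $\leq_{\mathrm{M}}$-partial order. More precisely, for any $k$-packed matrices $M_1$ and $M_2$, $\mathbf{F}_{M_1} \cdot \mathbf{F}_{M_2} = \sum_{\mathrm{ov}(M_1, M_2) \leq_{\mathrm{M}} M \leq_{\mathrm{M}} \mathrm{un}(M_1, M_2)} \mathbf{F}_M$.
   Context: Let $k \geq 1$, $A_k := \{0,1,\dots,k\}$. A $k$-packed matrix of size $n$ is an $n\times n$ matrix with entries in $A_k$ with at least one nonzero entry in each row and column. $\mathbf{PM}_k$ has fundamental basis $(\mathbf{F}_M)$ indexed by $k$-packed matrices and product $\mathbf{F}_{M_1}\cdot\mathbf{F}_{M_2} = \sum_{M \in \mathrm{Sh}_c(M_1,M_2)} \mathbf{F}_M$, where, for sizes $n_1, n_2$, $\mathrm{Sh}_c(M_1,M_2)$ is the set of all matrices obtained by shuffling the columns of $M_1$ with an $n_2 \times n_1$ zero block placed below it, with the columns of $M_2$ with an $n_1 \times n_2$ zero block placed above it. $\mathrm{ov}(M_1,M_2) := \begin{pmatrix} M_1 & 0 \\ 0 & M_2\end{pmatrix}$ and $\mathrm{un}(M_1,M_2) := \begin{pmatrix} 0 & M_1 \\ M_2 & 0 \end{pmatrix}$. Define $\to$ on $k$-packed matrices of size $n$: $M_1 \to M_2$ if there is $i \in [n-1]$ such that, with $s$ the number of $0$ ending the $i$th column of $M_1$ and $p$ the number of $0$ starting its $(i+1)$st column, $s + p \geq n$ and $M_2$ is obtained by exchanging columns $i$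 and $i+1$ of $M_1$. $\leq_{\mathrm{M}}$ is the reflexive and transitive closure of $\to$. *)

theory Defs
  imports Main "HOL-Library.Multiset"
begin

text \<open>A square matrix of size n is represented as the list of its n columns,
  each column being a list of n natural numbers (read top to bottom).\<close>

type_synonym pmatrix = "nat list list"

definition msize :: "pmatrix \<Rightarrow> nat" where
  "msize M = length M"

definition square :: "pmatrix \<Rightarrow> bool" where
  "square M \<longleftrightarrow> (\<forall>c \<in> set M. length c = length M)"

definition packed :: "nat \<Rightarrow> pmatrix \<Rightarrow> bool" where
  "packed k M \<longleftrightarrow> square M
     \<and> (\<forall>c \<in> set M. \<forall>x \<in> set c. x \<le> k)
     \<and> (\<forall>c \<in> set M. \<exists>x \<in> set c. x \<noteq> 0)
     \<and> (\<forall>i < length M. \<exists>c \<in> set M. c ! i \<noteq> 0)"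

definition pad_below :: "pmatrix \<Rightarrow> pmatrix \<Rightarrow> pmatrix" where
  "pad_below M1 M2 = map (\<lambda>c. c @ replicate (length M2) 0) M1"

definition pad_above :: "pmatrix \<Rightarrow> pmatrix \<Rightarrow> pmatrix" where
  "pad_above M1 M2 = map (\<lambda>c. replicate (length M1) 0 @ c) M2"

definition ov :: "pmatrix \<Rightarrow> pmatrix \<Rightarrow> pmatrix" where
  "ov M1 M2 = pad_below M1 M2 @ pad_above M1 M2"

definition un :: "pmatrix \<Rightarrow> pmatrix \<Rightarrow> pmatrix" where
  "un M1 M2 = pad_above M1 M2 @ pad_below M1 M2"

fun merge :: "bool list \<Rightarrow> 'a list \<Rightarrow> 'a list \<Rightarrow> 'a list" where
  "merge [] xs ys = xs @ ys"
| "merge (True # bs) (x # xs) ys = x # merge bs xs ys"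
| "merge (True # bs) [] ys = merge bs [] ys"
| "merge (False # bs) xs (y # ys) = y # merge bs xs ys"
| "merge (False # bs) xs [] = merge bs xs []"

definition Sh_c :: "pmatrix \<Rightarrow> pmatrix \<Rightarrow> pmatrix multiset" where
  "Sh_c M1 M2 = image_mset (\<lambda>bs. merge bs (pad_below M1 M2) (pad_above M1 M2))
     (mset_set {bs. length bs = length M1 + length M2 \<and> count_list bs True = length M1})"

definition swap_cols :: "nat \<Rightarrow> pmatrix \<Rightarrow> pmatrix" where
  "swap_cols i M = M[i := M ! Suc i, Suc i := M ! i]"

text \<open>The elementary move (0-based column index i, i.e. columns i+1, i+2 in the paper).\<close>
definition move :: "nat \<Rightarrow> pmatrix \<Rightarrow> pmatrix \<Rightarrow> bool" where
  "move k M1 M2 \<longleftrightarrow> packed k M1 \<and> packed k M2 \<and> length M2 = length M1 \<and>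
     (\<exists>i. Suc i < length M1 \<and>
        length (takeWhile ((=) 0) (rev (M1 ! i)))
          + length (takeWhile ((=) 0) (M1 ! Suc i)) \<ge> length M1
        \<and> M2 = swap_cols i M1)"

definition leM :: "nat \<Rightarrow> pmatrix \<Rightarrow> pmatrix \<Rightarrow> bool" where
  "leM k = (move k)\<^sup>*\<^sup>*"

end

theory Submission
  imports Defs
begin

definition tz :: "nat list \<Rightarrow> nat" where "tz c = length (takeWhile ((=) 0) (rev c))"
definition lz :: "nat list \<Rightarrow> nat" where "lz c = length (takeWhile ((=) 0) c)"
definition above :: "nat \<Rightarrow> nat list \<Rightarrow> nat list \<Rightarrow> bool" where "above n c d \<longleftrightarrow> n \<le> tz c + lz d"
definition sw :: "nat \<Rightarrow> pmatrix \<Rightarrow> pmatrix \<Rightarrow> bool" where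
 "sw n L L' \<longleftrightarrow> (\<exists>u c d v. L = u@c#d#v \<and> L' = u@d#c#v \<and> above n c d)"

lemma packed_mset: "packed k L \<Longrightarrow> mset L' = mset L \<Longrightarrow> packed k L'"
proof -
  assume a: "packed k L" "mset L' = mset L"
  then have "set L' = set L" "length L' = length L" by (metis mset_eq_setD, metis mset_eq_length)
  with a show ?thesis by (simp add: packed_def square_def)
qed

lemma sw_mset: "sw n L L' \<Longrightarrow> mset L' = mset L"
  by (auto simp: sw_def)

lemma sws_mset: "(sw n)\<^sup>*\<^sup>* L L' \<Longrightarrow> mset L' = mset L"
  by (induction rule: rtranclp_induct) (auto dest: sw_mset)

lemma sw_move: "sw n L L' \<Longrightarrow> packed k L \<Longrightarrow> n = length L \<Longrightarrow> move k L L'"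
proof -
  assume a: "sw n L L'" "packed k L" "n = length L"
  then obtain u c d v where L: "L = u@c#d#v" "L' = u@d#c#v" "above n c d" by (auto simp: sw_def)
  have p: "packed k L'" using a sw_mset packed_mset by blast
  show ?thesis unfolding move_def
    apply (intro conjI p a(2))
     apply (simp add: L)
    apply (rule exI[of _ "length u"])
    using L a(3) by (simp add: above_def tz_def lz_def swap_cols_def nth_append list_update_append)
qed

lemma sw_ctx: "sw n L L' \<Longrightarrow> sw n (pre @ L @ post) (pre @ L' @ post)"
proof -
  assume "sw n L L'"
  then obtain u c d v where "L = u@c#d#v" "L' = u@d#c#v" "above n c d" by (auto simp: sw_def)
  then show ?thesis unfolding sw_def by (intro exI[of _ "pre@u"] exI[of _ c] exI[of _ d] exI[of _ "v@post"]) simp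
qed

lemma sws_ctx: "(sw n)\<^sup>*\<^sup>* L L' \<Longrightarrow> (sw n)\<^sup>*\<^sup>* (pre @ L @ post) (pre @ L' @ post)"
  by (induction rule: rtranclp_induct) (auto intro: rtranclp.rtrancl_into_rtrancl sw_ctx)

lemma sws_pre: "(sw n)\<^sup>*\<^sup>* L L' \<Longrightarrow> (sw n)\<^sup>*\<^sup>* (x # L) (x # L')"
  using sws_ctx[of n L L' "[x]" "[]"] by simp

lemma sw_here: "above n c d \<Longrightarrow> sw n (c#d#v) (d#c#v)"
  unfolding sw_def by (intro exI[of _ "[]"] exI[of _ c] exI[of _ d] exI[of _ v]) simp

lemma bubble_left: "\<forall>x\<in>set xs. above n x y \<Longrightarrow> (sw n)\<^sup>*\<^sup>* (xs @ y # zs) (y # xs @ zs)"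
proof (induction xs)
  case Nil then show ?case by simp
next
  case (Cons x xs)
  then have "(sw n)\<^sup>*\<^sup>* (x # xs @ y # zs) (x # y # xs @ zs)" by (simp add: sws_pre)
  moreover have "sw n (x # y # xs @ zs) (y # x # xs @ zs)" using Cons.prems by (simp add: sw_here)
  ultimately show ?case by simp
qed

lemma bubble_right: "\<forall>y\<in>set ys. above n x y \<Longrightarrow> (sw n)\<^sup>*\<^sup>* (x # ys @ zs) (ys @ x # zs)"
proof (induction ys)
  case Nil then show ?case by simp
next
  case (Cons y ys)
  have "sw n (x # y # ys @ zs) (y # x # ys @ zs)" using Cons.prems by (simp add: sw_here)
  moreover have "(sw n)\<^sup>*\<^sup>* (y # x # ys @ zs) (y # ys @ x # zs)" using Cons by (simp add: sws_pre)
  ultimately show ?case by (simp add: converse_rtranclp_into_rtranclp)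
qed

lemma swap_all: "\<forall>x\<in>set xs. \<forall>y\<in>set ys. above n x y \<Longrightarrow> (sw n)\<^sup>*\<^sup>* (xs @ ys) (ys @ xs)"
proof (induction xs)
  case Nil then show ?case by simp
next
  case (Cons x xs)
  then have "(sw n)\<^sup>*\<^sup>* (x # xs @ ys) (x # ys @ xs)" by (simp add: sws_pre)
  moreover have "(sw n)\<^sup>*\<^sup>* (x # ys @ xs) (ys @ x # xs)" using Cons.prems by (simp add: bubble_right)
  ultimately show ?case by simp
qed

lemma claim1: "\<forall>x\<in>set xs. \<forall>y\<in>set ys. above n x y \<Longrightarrow> (sw n)\<^sup>*\<^sup>* (xs @ ys) (merge bs xs ys)"
proof (induction bs xs ys rule: merge.induct)
  case (4 bs xs y ys)
  have "(sw n)\<^sup>*\<^sup>* (xs @ y # ys) (y # xs @ ys)" using "4.prems" by (simp add: bubble_left)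
  moreover have "(sw n)\<^sup>*\<^sup>* (y # xs @ ys) (y # merge bs xs ys)" using 4 by (simp add: sws_pre)
  ultimately show ?case by simp
qed (auto simp: sws_pre)

lemma claim2: "\<forall>x\<in>set xs. \<forall>y\<in>set ys. above n x y \<Longrightarrow> (sw n)\<^sup>*\<^sup>* (merge bs xs ys) (ys @ xs)"
proof (induction bs xs ys rule: merge.induct)
  case (1 xs ys) then show ?case by (simp add: swap_all)
next
  case (2 bs x xs ys)
  have "(sw n)\<^sup>*\<^sup>* (x # merge bs xs ys) (x # ys @ xs)" using 2 by (simp add: sws_pre)
  moreover have "(sw n)\<^sup>*\<^sup>* (x # ys @ xs) (ys @ x # xs)" using "2.prems" by (simp add: bubble_right)
  ultimately show ?case by simp
qed (auto simp: sws_pre)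

lemma sws_leM: "(sw n)\<^sup>*\<^sup>* L L' \<Longrightarrow> packed k L \<Longrightarrow> n = length L \<Longrightarrow> leM k L L'"
  unfolding leM_def
proof (induction rule: rtranclp_induct)
  case base then show ?case by simp
next
  case (step M M')
  have "mset M = mset L" using step(1) sws_mset by blast
  then have "packed k M" "n = length M" using step packed_mset mset_eq_length by metis+
  then have "move k M M'" using step(2) sw_move by blast
  with step show ?case by (meson rtranclp.rtrancl_into_rtrancl)
qed

fun invc :: "nat \<Rightarrow> nat list list \<Rightarrow> nat" where
  "invc n [] = 0" | "invc n (x#xs) = length (filter (above n x) xs) + invc n xs"

lemma invc_swap: "above n c d \<Longrightarrow> \<not> above n d c \<Longrightarrow> invc n (u@d#c#v) < invc n (u@c#d#v)"
  by (induction u) auto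

lemma tw_bound: "\<not> P z \<Longrightarrow> length (takeWhile P (xs @ z # ys)) \<le> length xs"
  by (induction xs) auto

lemma lz_tz: "x \<in> set c \<Longrightarrow> x \<noteq> 0 \<Longrightarrow> lz c + tz c < length c"
proof -
  assume a: "x \<in> set c" "x \<noteq> 0"
  obtain z w where dw: "dropWhile ((=) 0) c = z # w" "z \<noteq> 0"
  proof -
    have ne: "dropWhile ((=) 0) c \<noteq> []" using a by (auto simp: dropWhile_eq_Nil_conv)
    then obtain z w where e: "dropWhile ((=) 0) c = z # w" by (cases "dropWhile ((=) 0) c") auto
    have "z \<noteq> 0" using hd_dropWhile[OF ne] e by simp
    with e show ?thesis using that by blast
  qed
  have c: "c = takeWhile ((=) 0) c @ z # w" using dw(1) takeWhile_dropWhile_id[of "(=) 0" c] by simp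
  have "rev c = rev w @ z # rev (takeWhile ((=) 0) c)" by (subst c) simp
  then have "tz c \<le> length (rev w)" unfolding tz_def using dw(2) tw_bound[of "(=) 0" z "rev w"] by simp
  then have "tz c \<le> length w" by simp
  moreover have "length c = lz c + Suc (length w)" unfolding lz_def by (subst c) simp
  ultimately show ?thesis by simp
qed

lemma not_both: "x \<in> set c \<Longrightarrow> x \<noteq> 0 \<Longrightarrow> y \<in> set d \<Longrightarrow> y \<noteq> 0 \<Longrightarrow> length c = n \<Longrightarrow> length d = n
   \<Longrightarrow> above n c d \<Longrightarrow> \<not> above n d c"
  using lz_tz[of x c] lz_tz[of y d] by (simp add: above_def)

lemma split3: "Suc i < length L \<Longrightarrow> L = take i L @ L!i # L!Suc i # drop (Suc (Suc i)) L"
  by (metis Cons_nth_drop_Suc Suc_lessD append_take_drop_id)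

lemma move_step: "move k L L' \<Longrightarrow> filter P L' = filter P L \<or> invc (length L) (filter P L') < invc (length L) (filter P L)"
proof -
  assume m: "move k L L'"
  then obtain i where i: "Suc i < length L" "length (takeWhile ((=) 0) (rev (L ! i)))
          + length (takeWhile ((=) 0) (L ! Suc i)) \<ge> length L" "L' = swap_cols i L"
    and pk: "packed k L" unfolding move_def by blast
  define u c d v where "u = take i L" "c = L!i" "d = L!Suc i" "v = drop (Suc (Suc i)) L"
  have L: "L = u@c#d#v" using split3[OF i(1)] u_c_d_v_def by simp
  have lu: "length u = i" using i(1) u_c_d_v_def by simp
  have L': "L' = u@d#c#v"
  proof -
    have "L ! i = c" "L ! Suc i = d" using L lu by (simp_all add: nth_append)
    moreover have "(u@c#d#v)[length u := d, Suc (length u) := c] = u@d#c#v"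
      by (simp add: list_update_append)
    ultimately have "L[i := L ! Suc i, Suc i := L ! i] = u @ d # c # v" using L lu by simp
    then show ?thesis using i(3) unfolding swap_cols_def by simp
  qed
  have ab: "above (length L) c d" using i(2) u_c_d_v_def by (simp add: above_def tz_def lz_def)
  have cd: "c \<in> set L" "d \<in> set L" using L by auto
  obtain x y where "x \<in> set c" "x \<noteq> 0" "y \<in> set d" "y \<noteq> 0" "length c = length L" "length d = length L"
    using pk cd unfolding packed_def square_def by meson
  then have nab: "\<not> above (length L) d c" using ab not_both by blast
  show ?thesis
  proof (cases "P c \<and> P d")
    case True
    then show ?thesis using invc_swap[OF ab nab, of "filter P u" "filter P v"] by (simp add: L L')
  qed (auto simp: L L')
qed

lemma move_len: "(move k)\<^sup>*\<^sup>* L L' \<Longrightarrow> length L' = length L"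
  by (induction rule: rtranclp_induct) (auto simp: move_def)

lemma moves_mono: "(move k)\<^sup>*\<^sup>* L L' \<Longrightarrow> invc (length L) (filter P L') \<le> invc (length L) (filter P L)
   \<and> (invc (length L) (filter P L') = invc (length L) (filter P L) \<longrightarrow> filter P L' = filter P L)"
proof (induction rule: rtranclp_induct)
  case base then show ?case by simp
next
  case (step M M')
  have "length M = length L" using step(1) move_len by blast
  then show ?case using move_step[OF step(2), of P] step(3) by auto
qed

lemma merge_id: "merge (map P xs) (filter P xs) (filter (\<lambda>x. \<not> P x) xs) = xs"
  by (induction xs) auto

lemma count_le: "count_list bs b \<le> length bs"
  by (induction bs) auto

lemma map_merge: "length bs = length xs + length ys \<Longrightarrow> count_list bs True = length xs \<Longrightarrow>
   \<forall>x\<in>set xs. P x \<Longrightarrow> \<forall>y\<in>set ys. \<not> P y \<Longrightarrow> map P (merge bs xs ys) = bs"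
proof (induction bs xs ys rule: merge.induct)
  case (1 xs ys) then show ?case by simp
next
  case (3 bs ys) then show ?case by (simp add: count_list_0_iff)
next
  case (5 bs xs) then show ?case
    using count_le[of bs True] by (cases xs) (auto simp: count_list_0_iff)
qed auto


lemma packed_ov: "packed k M1 \<Longrightarrow> packed k M2 \<Longrightarrow> packed k (ov M1 M2)"
proof -
  assume p1: "packed k M1" and p2: "packed k M2"
  have sq: "square (ov M1 M2)" using p1 p2
    by (auto simp: packed_def square_def ov_def pad_below_def pad_above_def)
  have e: "\<forall>c\<in>set (ov M1 M2). \<forall>x\<in>set c. x \<le> k" using p1 p2
    by (auto simp: packed_def ov_def pad_below_def pad_above_def)
  have nz: "\<forall>c\<in>set (ov M1 M2). \<exists>x\<in>set c. x \<noteq> 0" using p1 p2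
    by (fastforce simp: packed_def ov_def pad_below_def pad_above_def)
  have rows: "\<exists>c\<in>set (ov M1 M2). c ! i \<noteq> 0" if i: "i < length (ov M1 M2)" for i
  proof (cases "i < length M1")
    case True
    then obtain c where c: "c \<in> set M1" "c ! i \<noteq> 0" using p1 unfolding packed_def by blast
    have "length c = length M1" using p1 c unfolding packed_def square_def by blast
    then have "(c @ replicate (length M2) 0) ! i \<noteq> 0" using c True by (simp add: nth_append)
    then show ?thesis using c(1) by (auto simp: ov_def pad_below_def)
  next
    case False
    then have "i - length M1 < length M2" using i by (simp add: ov_def pad_below_def pad_above_def)
    then obtain c where c: "c \<in> set M2" "c ! (i - length M1) \<noteq> 0" using p2 unfolding packed_def by blast
    then have "(replicate (length M1) 0 @ c) ! i \<noteq> 0" using False by (simp add: nth_append)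
    then show ?thesis using c(1) by (auto simp: ov_def pad_above_def)
  qed
  show ?thesis unfolding packed_def using sq e nz rows by blast
qed

lemma tw_rep: "m \<le> length (takeWhile ((=) (0::nat)) (replicate m 0 @ ys))"
  by (induction m) auto

lemma above_pads: "packed k M1 \<Longrightarrow> packed k M2 \<Longrightarrow>
  \<forall>x\<in>set (pad_below M1 M2). \<forall>y\<in>set (pad_above M1 M2). above (length M1 + length M2) x y"
proof (intro ballI)
  fix x y assume x: "x \<in> set (pad_below M1 M2)" and y: "y \<in> set (pad_above M1 M2)"
  obtain c where c: "x = c @ replicate (length M2) 0" using x by (auto simp: pad_below_def)
  obtain d where d: "y = replicate (length M1) 0 @ d" using y by (auto simp: pad_above_def)
  have "tz x \<ge> length M2" unfolding tz_def c using tw_rep by simp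
  moreover have "lz y \<ge> length M1" unfolding lz_def d by (rule tw_rep)
  ultimately show "above (length M1 + length M2) x y" by (simp add: above_def)
qed

definition isA :: "nat \<Rightarrow> nat list \<Rightarrow> bool" where "isA m c \<longleftrightarrow> (\<forall>x\<in>set (drop m c). x = 0)"

lemma isA_pads: "packed k M1 \<Longrightarrow> packed k M2 \<Longrightarrow>
   (\<forall>x\<in>set (pad_below M1 M2). isA (length M1) x) \<and> (\<forall>y\<in>set (pad_above M1 M2). \<not> isA (length M1) y)"
  by (auto simp: packed_def square_def isA_def pad_below_def pad_above_def)

lemma cnt_map: "count_list (map P xs) True = length (filter P xs)"
  by (induction xs) auto

theorem proposition2p2:
  fixes k :: nat and M1 M2 :: pmatrix
  assumes "k \<ge> 1" and "packed k M1" and "packed k M2"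
  shows "Sh_c M1 M2 = mset_set {M. leM k (ov M1 M2) M \<and> leM k M (un M1 M2)}"
proof -
  define PA where "PA = pad_below M1 M2"
  define PB where "PB = pad_above M1 M2"
  define n where "n = length M1 + length M2"
  define P where "P = isA (length M1)"
  define S where "S = {bs. length bs = length M1 + length M2 \<and> count_list bs True = length M1}"
  define f where "f = (\<lambda>bs. merge bs PA PB)"
  have ov: "ov M1 M2 = PA @ PB" and un: "un M1 M2 = PB @ PA" by (simp_all add: PA_def PB_def ov_def un_def)
  have lPA: "length PA = length M1" and lPB: "length PB = length M2" by (simp_all add: PA_def PB_def pad_below_def pad_above_def)
  have pov: "packed k (PA @ PB)" using packed_ov[OF assms(2,3)] ov by simp
  have ab: "\<forall>x\<in>set PA. \<forall>y\<in>set PB. above n x y" using above_pads[OF assms(2,3)] PA_def PB_def n_def by simp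
  have iA: "\<forall>x\<in>set PA. P x" "\<forall>y\<in>set PB. \<not> P y" using isA_pads[OF assms(2,3)] PA_def PB_def P_def by simp_all
  have ln: "n = length (PA @ PB)" using lPA lPB n_def by simp
  have "S \<subseteq> {xs. set xs \<subseteq> (UNIV::bool set) \<and> length xs = length M1 + length M2}" by (auto simp: S_def)
  then have fin: "finite S" by (rule finite_subset) (rule finite_lists_length_eq[OF finite_UNIV])
  have inj: "inj_on f S"
  proof (rule inj_onI)
    fix a b assume a: "a \<in> S" and b: "b \<in> S" and e: "f a = f b"
    have "map P (f a) = a" unfolding f_def
      by (rule map_merge) (use a iA lPA lPB in \<open>simp_all add: S_def\<close>)
    moreover have "map P (f b) = b" unfolding f_def
      by (rule map_merge) (use b iA lPA lPB in \<open>simp_all add: S_def\<close>)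
    ultimately show "a = b" using e by metis
  qed
  have seteq: "{M. leM k (ov M1 M2) M \<and> leM k M (un M1 M2)} = f ` S"
  proof (intro equalityI subsetI)
    fix M assume "M \<in> {M. leM k (ov M1 M2) M \<and> leM k M (un M1 M2)}"
    then have m1: "(move k)\<^sup>*\<^sup>* (PA @ PB) M" and m2: "(move k)\<^sup>*\<^sup>* M (PB @ PA)"
      using ov un by (simp_all add: leM_def)
    have lM: "length M = n" using move_len[OF m1] ln by simp
    have fA: "filter P M = PA" and fB: "filter (\<lambda>x. \<not> P x) M = PB"
    proof -
      have e1: "filter P (PA @ PB) = PA" "filter P (PB @ PA) = PA" using iA by simp_all
      have e2: "filter (\<lambda>x. \<not> P x) (PA @ PB) = PB" "filter (\<lambda>x. \<not> P x) (PB @ PA) = PB" using iA by simp_all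
      note a1 = moves_mono[OF m1, of P] and a2 = moves_mono[OF m2, of P]
      have x1: "invc n (filter P M) \<le> invc n PA \<and> (invc n (filter P M) = invc n PA \<longrightarrow> filter P M = PA)"
        using a1[unfolded e1(1) ln[symmetric]] .
      have x2: "invc n PA \<le> invc n (filter P M)" using a2[unfolded e1(2) lM] by blast
      show "filter P M = PA" using x1 x2 by simp
      note b1 = moves_mono[OF m1, of "\<lambda>x. \<not> P x"] and b2 = moves_mono[OF m2, of "\<lambda>x. \<not> P x"]
      have y1: "invc n (filter (\<lambda>x. \<not> P x) M) \<le> invc n PB \<and> (invc n (filter (\<lambda>x. \<not> P x) M) = invc n PB \<longrightarrow> filter (\<lambda>x. \<not> P x) M = PB)"
        using b1[unfolded e2(1) ln[symmetric]] .
      have y2: "invc n PB \<le> invc n (filter (\<lambda>x. \<not> P x) M)" using b2[unfolded e2(2) lM] by blast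
      show "filter (\<lambda>x. \<not> P x) M = PB" using y1 y2 by simp
    qed
    have "M = f (map P M)" unfolding f_def using merge_id[of P M] fA fB by simp
    moreover have "map P M \<in> S" unfolding S_def using lM n_def fA lPA
      by (simp add: cnt_map)
    ultimately show "M \<in> f ` S" by blast
  next
    fix M assume "M \<in> f ` S"
    then obtain bs where M: "M = merge bs PA PB" unfolding f_def by blast
    have s1: "(sw n)\<^sup>*\<^sup>* (PA @ PB) M" using claim1[OF ab] M by simp
    have s2: "(sw n)\<^sup>*\<^sup>* M (PB @ PA)" using claim2[OF ab] M by simp
    have pM: "packed k M" using packed_mset[OF pov sws_mset[OF s1]] .
    have lnM: "n = length M" using ln mset_eq_length[OF sws_mset[OF s1]] by simp
    show "M \<in> {M. leM k (ov M1 M2) M \<and> leM k M (un M1 M2)}"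
      using sws_leM[OF s1 pov ln] sws_leM[OF s2 pM lnM] ov un by simp
  qed
  show ?thesis unfolding seteq Sh_c_def S_def[symmetric] PA_def[symmetric] PB_def[symmetric]
    using image_mset_mset_set[OF inj] f_def by simp
qed

end
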